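(* Let $u=p_1(t)e^{-|x-q_1(t)|}+p_2(t)e^{-|x-q_2(t)|}$ be a 2-peakon solution of the Camassa-Holm equation, i.e. $(q,p)$ solves $\dot q_i=\partial H/\partial p_i$, $\dot p_i=-\partial H/\partial q_i$, $H=\frac12\sum_{i,j=1}^2p_ip_je^{-|q_i-q_j|}$, with $q_1(0)>q_2(0)$ and energy $H_1:=p_1^2+p_2^2+2p_1p_2e^{-|q_1-q_2|}=c>0$. Then the two peakons collide (i.e. $q_1(t)-q_2(t)\to0$ at some finite time) if and only if the momentum $H_0=p_1+p_2$ satisfies $|H_0|<\sqrt c$ and $p_1-p_2<0$ at $t=0$. Equivalently, if and only if $p_1<0$ and $p_2>0$ at $t=0$. *)

theory Defs
  imports "HOL-Analysis.Analysis"
begin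

definition peakon_H :: "real \<Rightarrow> real \<Rightarrow> real \<Rightarrow> real \<Rightarrow> real" where
  "peakon_H q1 q2 p1 p2 =
     1/2 * (p1 * p1 * exp (- \<bar>q1 - q1\<bar>) + p1 * p2 * exp (- \<bar>q1 - q2\<bar>)
          + p2 * p1 * exp (- \<bar>q2 - q1\<bar>) + p2 * p2 * exp (- \<bar>q2 - q2\<bar>))"

definition peakon_H1 :: "real \<Rightarrow> real \<Rightarrow> real \<Rightarrow> real \<Rightarrow> real" where
  "peakon_H1 q1 q2 p1 p2 = p1\<^sup>2 + p2\<^sup>2 + 2 * p1 * p2 * exp (- \<bar>q1 - q2\<bar>)"

definition peakon_hamilton_sol ::
  "(real \<Rightarrow> real) \<Rightarrow> (real \<Rightarrow> real) \<Rightarrow> (real \<Rightarrow> real) \<Rightarrow> (real \<Rightarrow> real) \<Rightarrow> real set \<Rightarrow> bool" where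
  "peakon_hamilton_sol q1 q2 p1 p2 I \<longleftrightarrow>
     (\<forall>t\<in>I. \<exists>a1 a2 b1 b2.
        (q1 has_real_derivative a1) (at t within I) \<and>
        (q2 has_real_derivative a2) (at t within I) \<and>
        (p1 has_real_derivative b1) (at t within I) \<and>
        (p2 has_real_derivative b2) (at t within I) \<and>
        ((\<lambda>y. peakon_H (q1 t) (q2 t) y (p2 t)) has_real_derivative a1) (at (p1 t)) \<and>
        ((\<lambda>y. peakon_H (q1 t) (q2 t) (p1 t) y) has_real_derivative a2) (at (p2 t)) \<and>
        ((\<lambda>y. peakon_H y (q2 t) (p1 t) (p2 t)) has_real_derivative (- b1)) (at (q1 t)) \<and>
        ((\<lambda>y. peakon_H (q1 t) y (p1 t) (p2 t)) has_real_derivative (- b2)) (at (q2 t)))"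

definition peakons_collide :: "real \<Rightarrow> real \<Rightarrow> real \<Rightarrow> real \<Rightarrow> bool" where
  "peakons_collide x1 x2 m1 m2 \<longleftrightarrow>
     (\<exists>T>0. \<exists>q1 q2 p1 p2.
        peakon_hamilton_sol q1 q2 p1 p2 {0..<T} \<and>
        q1 0 = x1 \<and> q2 0 = x2 \<and> p1 0 = m1 \<and> p2 0 = m2 \<and>
        (\<forall>t\<in>{0..<T}. q1 t > q2 t) \<and>
        ((\<lambda>t. q1 t - q2 t) \<longlongrightarrow> 0) (at_left T))"

end

theory Submission
  imports Defs
begin


lemma H_dp1:
  "((\<lambda>y. peakon_H q1 q2 y p2) has_real_derivative (p1 + p2 * exp (-\<bar>q1 - q2\<bar>))) (at p1)"
  unfolding peakon_H_def
  by (rule derivative_eq_intros refl | simp)+ (simp add: abs_minus_commute algebra_simps)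

lemma H_dp2:
  "((\<lambda>y. peakon_H q1 q2 p1 y) has_real_derivative (p2 + p1 * exp (-\<bar>q1 - q2\<bar>))) (at p2)"
  unfolding peakon_H_def
  by (rule derivative_eq_intros refl | simp)+ (simp add: abs_minus_commute algebra_simps)

lemma H_dq1:
  assumes "q1 > q2"
  shows "((\<lambda>y. peakon_H y q2 p1 p2) has_real_derivative (- (p1 * p2 * exp (-(q1 - q2))))) (at q1)"
proof (rule has_field_derivative_transform_within_open[where S="{q2<..}" and f="\<lambda>y. 1/2 * (p1*p1 + 2*p1*p2*exp (-(y - q2)) + p2*p2)"])
  show "((\<lambda>y. 1/2 * (p1*p1 + 2*p1*p2*exp (-(y - q2)) + p2*p2)) has_real_derivative (- (p1 * p2 * exp (-(q1 - q2))))) (at q1)"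
    by (rule derivative_eq_intros refl | simp)+
  show "\<And>x. x \<in> {q2<..} \<Longrightarrow> 1/2 * (p1*p1 + 2*p1*p2*exp (-(x - q2)) + p2*p2) = peakon_H x q2 p1 p2"
    by (auto simp: peakon_H_def abs_minus_commute algebra_simps)
qed (use assms in auto)

lemma H_dq2:
  assumes "q1 > q2"
  shows "((\<lambda>y. peakon_H q1 y p1 p2) has_real_derivative (p1 * p2 * exp (-(q1 - q2)))) (at q2)"
proof (rule has_field_derivative_transform_within_open[where S="{..<q1}" and f="\<lambda>y. 1/2 * (p1*p1 + 2*p1*p2*exp (-(q1 - y)) + p2*p2)"])
  show "((\<lambda>y. 1/2 * (p1*p1 + 2*p1*p2*exp (-(q1 - y)) + p2*p2)) has_real_derivative (p1 * p2 * exp (-(q1 - q2)))) (at q2)"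
    by (rule derivative_eq_intros refl | simp)+
  show "\<And>x. x \<in> {..<q1} \<Longrightarrow> 1/2 * (p1*p1 + 2*p1*p2*exp (-(q1 - x)) + p2*p2) = peakon_H q1 x p1 p2"
    by (auto simp: peakon_H_def abs_minus_commute algebra_simps)
qed (use assms in auto)



lemma alg1:
  fixes A B G a b h :: real assumes nz: "a \<noteq> 0" "b \<noteq> 0" "h \<noteq> 0"
    and e: "a = A + B*G" "b = B + A*G" "h = 1 - G"
  shows "- A / 2 + B * ((A+B)/2 * G) / a =
     -a/(2*h) + b/(2*h) * ((A+B)^2*G/(a*b))"
  using nz by (simp add: field_simps power2_eq_square) (simp add: e algebra_simps)

lemma alg2:
  fixes A B G a b h :: real assumes nz: "a \<noteq> 0" "b \<noteq> 0" "h \<noteq> 0"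
    and e: "a = A + B*G" "b = B + A*G" "h = 1 - G"
  shows "B / 2 - A * ((A+B)/2 * G) / b =
     b/(2*h) + -a/(2*h) * ((A+B)^2*G/(a*b))"
  using nz by (simp add: field_simps power2_eq_square) (simp add: e algebra_simps)

lemma alg3:
  fixes A B G a b h :: real assumes nz: "a \<noteq> 0" "b \<noteq> 0" "h \<noteq> 0"
    and e: "a = A + B*G" "b = B + A*G" "h = 1 - G"
  shows "-((A+B)/2 * (A + B) * G) / (2 * h^2) =
     -a/(2*h) * (b/(2*h)) * ((A+B)^2*G/(a*b))"
  using nz by (simp add: field_simps power2_eq_square)


lemma aux2:
  fixes v a p w :: real
  assumes "w = v + a" "w \<noteq> 0" "a \<noteq> 0" "v - p \<noteq> 0" "v + p \<noteq> 0"
  shows "(2*a)^2*((v-a)/w)/((2*a*(v-p)/w)*(2*a*(v+p)/w)) = (v^2-a^2)/(v^2-p^2)"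
proof -
  have "(2*a)^2*((v-a)/w)/((2*a*(v-p)/w)*(2*a*(v+p)/w)) = (v-a)*w/((v-p)*(v+p))"
  proof -
    have "v * v - p * p \<noteq> 0" using assms(4,5) by (metis mult_eq_0_iff square_diff_square_factored)
    then have "a*a*(w*4)*(v * v - p * p) \<noteq> 0" using assms(2,3) by simp
    then show ?thesis
      using assms(2-5) \<open>v * v - p * p \<noteq> 0\<close> by (simp add: field_simps power2_eq_square)
  qed
  also have "\<dots> = (v^2-a^2)/(v^2-p^2)"
    using assms(1) by (simp add: power2_eq_square algebra_simps)
  finally show ?thesis .
qed


lemma gronwall_pos:
  fixes r r' :: "real \<Rightarrow> real"
  assumes T: "T > 0"
    and d: "\<And>t. t\<in>{0..<T} \<Longrightarrow> (r has_real_derivative r' t) (at t within {0..<T})"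
    and b: "\<And>t. t\<in>{0..<T} \<Longrightarrow> r' t \<ge> -C * r t"
    and C: "C \<ge> 0" and r0: "r 0 \<ge> 0"
  shows "\<And>t. t\<in>{0..<T} \<Longrightarrow> r t \<ge> r 0 * exp (-C*T)"
proof -
  fix t assume t: "t \<in> {0..<T}"
  define f where "f = (\<lambda>x. r x * exp (C * x))"
  have fd: "(f has_real_derivative (r' x * exp (C*x) + r x * (exp (C*x) * C))) (at x within {0..<T})"
    if "x \<in> {0..<T}" for x
    unfolding f_def
    by (rule derivative_eq_intros d[OF that] refl | simp)+
  have "f 0 \<le> f t"
  proof (rule DERIV_nonneg_imp_increasing_open[where f=f])
    show "0 \<le> t" using t by auto
    show "\<exists>y. DERIV f x :> y \<and> 0 \<le> y" if "0 < x" "x < t" for x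
    proof -
      have xI: "x \<in> {0..<T}" using that t by auto
      have "at x within {0..<T} = at x"
        by (rule at_within_open_subset[where S="{0<..<T}"]) (use that t in auto)
      then have "DERIV f x :> (r' x * exp (C*x) + r x * (exp (C*x) * C))"
        using fd[OF xI] by simp
      moreover have "0 \<le> r' x * exp (C*x) + r x * (exp (C*x) * C)"
      proof -
        have "0 \<le> (r' x + C * r x) * exp (C*x)"
          using b[OF xI] by (intro mult_nonneg_nonneg) auto
        then show ?thesis by (simp add: algebra_simps)
      qed
      ultimately show ?thesis by blast
    qed
    have "continuous_on {0..<T} f"
      unfolding continuous_on_eq_continuous_within using fd DERIV_continuous by blast
    then show "continuous_on {0..t} f"
      by (rule continuous_on_subset) (use t in auto)
  qed
  then have "r 0 \<le> r t * exp (C * t)" by (simp add: f_def)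
  then have "r 0 * exp (-C*t) \<le> r t"
    by (simp add: exp_minus field_simps)
  moreover have "r 0 * exp (-C*T) \<le> r 0 * exp (-C*t)"
    using t C r0 by (intro mult_left_mono) (auto intro: mult_left_mono)
  ultimately show "r t \<ge> r 0 * exp (-C*T)" by linarith
qed

lemma no_limit_zero:
  fixes r :: "real \<Rightarrow> real"
  assumes "T > 0" "\<And>t. t\<in>{0..<T} \<Longrightarrow> r t \<ge> L" "L > 0"
    and "(r \<longlongrightarrow> 0) (at_left T)"
  shows False
proof -
  have "eventually (\<lambda>t. L \<le> r t) (at_left T)"
    using eventually_at_left_real[OF assms(1)] by eventually_elim (use assms(2) in auto)
  then have "L \<le> 0"
    using tendsto_lowerbound[OF assms(4)] trivial_limit_at_left_real by blast
  then show False using assms(3) by simp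
qed



lemma collide_only_if:
  assumes sol: "peakon_hamilton_sol q1 q2 p1 p2 {0..<T}" and T: "T > 0"
    and gt: "\<forall>t\<in>{0..<T}. q1 t > q2 t"
    and lim: "((\<lambda>t. q1 t - q2 t) \<longlongrightarrow> 0) (at_left T)"
  shows "p1 0 < 0 \<and> p2 0 > 0"
proof -
  define I where "I = {0..<T::real}"
  define E where "E = (\<lambda>t. exp (-(q1 t - q2 t)))"
  have D: "(q1 has_real_derivative (p1 t + p2 t * E t)) (at t within I) \<and>
           (q2 has_real_derivative (p2 t + p1 t * E t)) (at t within I) \<and>
           (p1 has_real_derivative (p1 t * p2 t * E t)) (at t within I) \<and>
           (p2 has_real_derivative (-(p1 t * p2 t * E t))) (at t within I)"
    if t: "t \<in> I" for t
  proof -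
    from sol t obtain a1 a2 b1 b2 where
      h: "(q1 has_real_derivative a1) (at t within I)"
        "(q2 has_real_derivative a2) (at t within I)"
        "(p1 has_real_derivative b1) (at t within I)"
        "(p2 has_real_derivative b2) (at t within I)"
        "((\<lambda>y. peakon_H (q1 t) (q2 t) y (p2 t)) has_real_derivative a1) (at (p1 t))"
        "((\<lambda>y. peakon_H (q1 t) (q2 t) (p1 t) y) has_real_derivative a2) (at (p2 t))"
        "((\<lambda>y. peakon_H y (q2 t) (p1 t) (p2 t)) has_real_derivative (- b1)) (at (q1 t))"
        "((\<lambda>y. peakon_H (q1 t) y (p1 t) (p2 t)) has_real_derivative (- b2)) (at (q2 t))"
      unfolding peakon_hamilton_sol_def I_def by blast
    have gt': "q1 t > q2 t" using gt t I_def by auto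
    have abs: "\<bar>q1 t - q2 t\<bar> = q1 t - q2 t" using gt' by simp
    have "a1 = p1 t + p2 t * E t" using DERIV_unique[OF h(5) H_dp1] abs E_def by simp
    moreover have "a2 = p2 t + p1 t * E t" using DERIV_unique[OF h(6) H_dp2] abs E_def by simp
    moreover have "b1 = p1 t * p2 t * E t" using DERIV_unique[OF h(7) H_dq1[OF gt']] E_def by simp
    moreover have "b2 = -(p1 t * p2 t * E t)" using DERIV_unique[OF h(8) H_dq2[OF gt']] E_def by simp
    ultimately show ?thesis using h by simp
  qed
  have Epos: "E t > 0" for t unfolding E_def by simp
  have Elt1: "E t < 1" if "t \<in> I" for t
    using gt that unfolding E_def I_def by auto
  have convI: "convex I" unfolding I_def by simp
  have "0 \<in> I" using T I_def by simp
  have "\<exists>c. \<forall>t\<in>I. p1 t + p2 t = c"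
  proof (rule has_field_derivative_zero_constant[OF convI])
    fix t assume "t \<in> I"
    from D[OF this] show "((\<lambda>t. p1 t + p2 t) has_field_derivative 0) (at t within I)"
      by (auto intro!: derivative_eq_intros)
  qed
  then have Pc: "\<And>t. t \<in> I \<Longrightarrow> p1 t + p2 t = p1 0 + p2 0" using \<open>0\<in>I\<close> by metis
  have "\<exists>c. \<forall>t\<in>I. p1 t * p2 t * (1 - E t) = c"
  proof (rule has_field_derivative_zero_constant[OF convI])
    fix t assume "t \<in> I"
    note Dt = D[OF this]
    have "((\<lambda>t. p1 t * p2 t * (1 - exp (-(q1 t - q2 t)))) has_field_derivative 0) (at t within I)"
      by (rule derivative_eq_intros Dt[THEN conjunct1] Dt[THEN conjunct2, THEN conjunct1]
          Dt[THEN conjunct2, THEN conjunct2, THEN conjunct1] Dt[THEN conjunct2, THEN conjunct2, THEN conjunct2] refl | simp)+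
        (simp add: E_def algebra_simps)
    then show "((\<lambda>t. p1 t * p2 t * (1 - E t)) has_field_derivative 0) (at t within I)"
      by (simp add: E_def)
  qed
  then have Kc: "\<And>t. t \<in> I \<Longrightarrow> p1 t * p2 t * (1 - E t) = p1 0 * p2 0 * (1 - E 0)"
    using \<open>0\<in>I\<close> by metis
  define r where "r = (\<lambda>t. q1 t - q2 t)"
  have rd: "(r has_real_derivative ((p1 t - p2 t) * (1 - E t))) (at t within I)" if "t \<in> I" for t
    unfolding r_def using D[OF that]
    by (auto intro!: derivative_eq_intros simp: algebra_simps)
  have r0: "r 0 > 0" using gt T unfolding r_def by auto
  have rbound: "1 - E t \<le> r t" for t
    using exp_ge_add_one_self[of "q2 t - q1 t"] unfolding E_def r_def by (simp add: algebra_simps)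
  have nocol: False
    if C: "C \<ge> 0" and b: "\<And>t. t \<in> I \<Longrightarrow> (p1 t - p2 t) * (1 - E t) \<ge> - C * r t" for C
  proof -
    have "\<And>t. t\<in>{0..<T} \<Longrightarrow> r t \<ge> r 0 * exp (-C*T)"
      by (rule gronwall_pos[OF T _ _ C]) (use rd b r0 I_def in auto)
    moreover have "r 0 * exp (-C*T) > 0" using r0 by simp
    ultimately show False
      using no_limit_zero[OF T _ _ lim[folded r_def]] by blast
  qed
  show ?thesis
  proof (rule ccontr)
    assume neg: "\<not> (p1 0 < 0 \<and> p2 0 > 0)"
    have E0: "E 0 < 1" using Elt1 \<open>0\<in>I\<close> .
    show False
    proof (cases "p1 0 * p2 0 \<ge> 0")
      case True
      let ?P = "p1 0 + p2 0"
      show False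
      proof (rule nocol[of "\<bar>?P\<bar>"])
        fix t assume t: "t \<in> I"
        have "p1 t * p2 t * (1 - E t) \<ge> 0" using Kc[OF t] True E0 by simp
        then have pp: "p1 t * p2 t \<ge> 0" using Elt1[OF t]
          by (simp add: zero_le_mult_iff)
        have "(p1 t - p2 t)^2 \<le> (p1 t + p2 t)^2" using pp by (simp add: power2_eq_square algebra_simps)
        then have "\<bar>p1 t - p2 t\<bar> \<le> \<bar>?P\<bar>" using Pc[OF t] by (metis abs_le_square_iff)
        then have "p1 t - p2 t \<ge> - \<bar>?P\<bar>" by linarith
        then have "(p1 t - p2 t) * (1 - E t) \<ge> - \<bar>?P\<bar> * (1 - E t)"
          using Elt1[OF t] by (intro mult_right_mono) auto
        moreover have "- \<bar>?P\<bar> * (1 - E t) \<ge> - \<bar>?P\<bar> * r t"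
          using rbound[of t] by (simp add: mult_left_mono)
        ultimately show "(p1 t - p2 t) * (1 - E t) \<ge> - \<bar>?P\<bar> * r t" by linarith
      qed simp
    next
      case False
      with neg have s: "p1 0 > 0" "p2 0 < 0"
        by (auto simp: mult_less_0_iff not_le)
      have K0: "p1 0 * p2 0 * (1 - E 0) < 0" using s E0 by (simp add: mult_pos_neg mult_neg_pos)
      have pp: "p1 t * p2 t < 0" if "t \<in> I" for t
      proof -
        have "p1 t * p2 t * (1 - E t) < 0" using Kc[OF that] K0 by simp
        then show ?thesis using Elt1[OF that] by (simp add: mult_less_0_iff)
      qed
      have contp1: "continuous_on I p1"
        unfolding continuous_on_eq_continuous_within using D DERIV_continuous by blast
      have p1pos: "p1 t > 0" if t: "t \<in> I" for t
      proof (rule ccontr)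
        assume "\<not> p1 t > 0"
        then have "p1 t \<le> 0" by simp
        moreover have "continuous_on {0..t} p1"
          by (rule continuous_on_subset[OF contp1]) (use t I_def in auto)
        ultimately obtain x where x: "0 \<le> x" "x \<le> t" "p1 x = 0"
          using IVT2'[of p1 t 0 0] t s I_def by auto
        then have "x \<in> I" using t I_def by auto
        from pp[OF this] x(3) show False by simp
      qed
      show False
      proof (rule nocol[of 0])
        fix t assume t: "t \<in> I"
        have "p2 t < 0" using pp[OF t] p1pos[OF t] by (simp add: mult_less_0_iff)
        then have "p1 t - p2 t > 0" using p1pos[OF t] by simp
        then show "(p1 t - p2 t) * (1 - E t) \<ge> - 0 * r t"
          using Elt1[OF t] by simp
      qed simp
    qed
  qed
qed



lemma explicit_sol:
  fixes A B g0 c1 :: real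
  assumes A: "A > 0" and B: "B > 0" and g0: "g0 > 0"
  assumes al_def: "al = (A+B)/2"
  assumes g_def: "g = (\<lambda>t. g0 * exp (al * t))"
  assumes P1_def: "P1 = (\<lambda>t. -(A + B * g t) / (2 * (1 - g t)))"
  assumes P2_def: "P2 = (\<lambda>t. (B + A * g t) / (2 * (1 - g t)))"
  assumes Q1_def: "Q1 = (\<lambda>t. c1 - A * t / 2 + ln (A + B * g t))"
  assumes Q2_def: "Q2 = (\<lambda>t. c1 + ln ((A+B)^2 * g0) + B * t / 2 - ln (B + A * g t))"
  shows "\<And>t. exp (-(Q1 t - Q2 t)) = (A+B)^2 * g t / ((A + B * g t) * (B + A * g t))"
    and "\<And>t. g t < 1 \<Longrightarrow> Q1 t > Q2 t"
    and "\<And>t. g t < 1 \<Longrightarrow>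
      (Q1 has_real_derivative (P1 t + P2 t * exp (-(Q1 t - Q2 t)))) (at t) \<and>
      (Q2 has_real_derivative (P2 t + P1 t * exp (-(Q1 t - Q2 t)))) (at t) \<and>
      (P1 has_real_derivative (P1 t * P2 t * exp (-(Q1 t - Q2 t)))) (at t) \<and>
      (P2 has_real_derivative (-(P1 t * P2 t * exp (-(Q1 t - Q2 t))))) (at t)"
    and "isCont (\<lambda>t. Q1 t - Q2 t) t"
proof -
  have gpos: "g t > 0" for t unfolding g_def using g0 by simp
  have X1: "A + B * g t > 0" for t using A B gpos[of t] by (simp add: add_pos_pos)
  have X2: "B + A * g t > 0" for t using A B gpos[of t] by (simp add: add_pos_pos)
  show Ef: "exp (-(Q1 t - Q2 t)) = (A+B)^2 * g t / ((A + B * g t) * (B + A * g t))" for t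
  proof -
    have "-(Q1 t - Q2 t) = ln ((A+B)^2 * g0) + al * t - ln (A + B * g t) - ln (B + A * g t)"
      unfolding Q1_def Q2_def al_def by (simp add: algebra_simps)
    then have "exp (-(Q1 t - Q2 t)) = ((A+B)^2 * g0) * exp (al * t) / (A + B * g t) / (B + A * g t)"
      using A B g0 X1[of t] X2[of t] by (simp add: exp_diff exp_add)
    then show ?thesis unfolding g_def by simp
  qed
  show "Q1 t > Q2 t" if "g t < 1" for t
  proof -
    have "(A + B * g t) * (B + A * g t) - (A+B)^2 * g t = A * B * (1 - g t)^2"
      by (simp add: power2_eq_square algebra_simps)
    moreover have "A * B * (1 - g t)^2 > 0" using A B that by simp
    ultimately have "(A+B)^2 * g t < (A + B * g t) * (B + A * g t)" by linarith
    then have "exp (-(Q1 t - Q2 t)) < 1" using Ef[of t] X1[of t] X2[of t] by simp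
    then show ?thesis by simp
  qed
  show "isCont (\<lambda>t. Q1 t - Q2 t) t"
  proof -
    have "isCont (\<lambda>t. A + B * g t) t" "isCont (\<lambda>t. B + A * g t) t"
      unfolding g_def by (auto intro!: continuous_intros)
    then show ?thesis unfolding Q1_def Q2_def
      using X1[of t] X2[of t] by (auto intro!: continuous_intros isCont_ln)
  qed
  fix t assume g1: "g t < 1"
  have nz: "A + B * g t \<noteq> 0" "B + A * g t \<noteq> 0" "1 - g t \<noteq> 0"
    using X1[of t] X2[of t] g1 by auto
  have sq: "16 + g t * (g t * 16) - g t * 32 \<noteq> 0" "4 + g t * (g t * 4) - g t * 8 \<noteq> 0"
  proof -
    have e1: "16 + g t * (g t * 16) - g t * 32 = 16 * (1 - g t)^2"
      by (simp add: power2_eq_square algebra_simps)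
    have e2: "4 + g t * (g t * 4) - g t * 8 = 4 * (1 - g t)^2"
      by (simp add: power2_eq_square algebra_simps)
    have "(1 - g t)^2 \<noteq> 0" using nz by simp
    then show "16 + g t * (g t * 16) - g t * 32 \<noteq> 0" "4 + g t * (g t * 4) - g t * 8 \<noteq> 0"
      unfolding e1 e2 by simp_all
  qed
  have gd: "(g has_real_derivative (al * g t)) (at t)"
    unfolding g_def by (rule derivative_eq_intros refl | simp)+
  note E = Ef[of t]
  have "(Q1 has_real_derivative (- A / 2 + B * ((A+B)/2 * g t) / (A + B * g t))) (at t)"
    unfolding Q1_def using nz X1[of t] gd unfolding al_def
    by (auto intro!: derivative_eq_intros) (simp_all add: field_simps)
  then have d1: "(Q1 has_real_derivative (P1 t + P2 t * exp (-(Q1 t - Q2 t)))) (at t)"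
    unfolding E P1_def P2_def using alg1[OF nz refl refl refl] by simp
  have "(Q2 has_real_derivative (B / 2 - A * ((A+B)/2 * g t) / (B + A * g t))) (at t)"
    unfolding Q2_def using nz X2[of t] gd unfolding al_def
    by (auto intro!: derivative_eq_intros) (simp_all add: field_simps)
  then have d2: "(Q2 has_real_derivative (P2 t + P1 t * exp (-(Q1 t - Q2 t)))) (at t)" 
    unfolding E P1_def P2_def using alg2[OF nz refl refl refl] by simp
  have "(P1 has_real_derivative (-((A+B)/2 * (A + B) * g t) / (2 * (1 - g t)^2))) (at t)"
    unfolding P1_def using nz gd unfolding al_def
    by (auto intro!: derivative_eq_intros simp: field_simps power2_eq_square) (use sq in \<open>simp_all add: field_simps\<close>)
  then have d3: "(P1 has_real_derivative (P1 t * P2 t * exp (-(Q1 t - Q2 t)))) (at t)"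
    unfolding E P1_def P2_def using alg3[OF nz refl refl refl] by simp
  have "(P2 has_real_derivative (((A+B)/2 * (A + B) * g t) / (2 * (1 - g t)^2))) (at t)"
    unfolding P2_def using nz gd unfolding al_def
    by (auto intro!: derivative_eq_intros simp: field_simps power2_eq_square) (use sq in \<open>simp_all add: field_simps\<close>)
  moreover have "-((A+B)/2 * (A + B) * g t) / (2 * (1 - g t)^2) = P1 t * P2 t * exp (-(Q1 t - Q2 t))"
    unfolding E P1_def P2_def using alg3[OF nz refl refl refl] by simp
  then have "((A+B)/2 * (A + B) * g t) / (2 * (1 - g t)^2) = -(P1 t * P2 t * exp (-(Q1 t - Q2 t)))"
    by (metis equation_minus_iff minus_divide_left)
  ultimately have d4: "(P2 has_real_derivative (-(P1 t * P2 t * exp (-(Q1 t - Q2 t))))) (at t)"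
    by (simp only:)
  show "(Q1 has_real_derivative (P1 t + P2 t * exp (-(Q1 t - Q2 t)))) (at t) \<and>
      (Q2 has_real_derivative (P2 t + P1 t * exp (-(Q1 t - Q2 t)))) (at t) \<and>
      (P1 has_real_derivative (P1 t * P2 t * exp (-(Q1 t - Q2 t)))) (at t) \<and>
      (P2 has_real_derivative (-(P1 t * P2 t * exp (-(Q1 t - Q2 t))))) (at t)"
    using d1 d2 d3 d4 by blast
qed



lemma aux_div: "(w::real) \<noteq> 0 \<Longrightarrow> a \<noteq> 0 \<Longrightarrow> (2*a*x/w)/(2*(2*a/w)) = x/2"
  by (simp add: field_simps)

lemma collide_if:
  assumes x: "x1 > x2" and m: "m1 < 0" "m2 > 0"
  shows "peakons_collide x1 x2 m1 m2"
proof -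
  define E0 where "E0 = exp (-(x1 - x2))"
  define P where "P = m1 + m2"
  define k where "k = -m1*m2*(1-E0)"
  define al where "al = sqrt (P^2 + 4*k)"
  define v0 where "v0 = m2 - m1"
  define A where "A = al - P"
  define B where "B = al + P"
  define g0 where "g0 = (v0 - al) / (v0 + al)"
  define T where "T = - ln g0 / al"
  define c1 where "c1 = x1 - ln (A + B * g0)"
  have E0: "0 < E0" "E0 < 1" using x unfolding E0_def by auto
  have mm: "m1 * m2 < 0" using m by (simp add: mult_neg_pos)
  have k: "k > 0" unfolding k_def using mm E0 by (simp add: mult_neg_pos)
  have al2: "al^2 = P^2 + 4*k" unfolding al_def using k by (simp add: add_nonneg_pos)
  have alpos: "al > 0" unfolding al_def using k by (simp add: add_nonneg_pos)
  have "\<bar>P\<bar> < al"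
  proof -
    have "\<bar>P\<bar>^2 < al^2" using al2 k by simp
    then show ?thesis using alpos by (smt (verit) abs_ge_zero power_mono)
  qed
  then have A: "A > 0" and B: "B > 0" unfolding A_def B_def by auto
  have ABal: "(A+B)/2 = al" unfolding A_def B_def by simp
  have v0pos: "v0 > 0" unfolding v0_def using m by simp
  have v0sq: "v0^2 - P^2 = -4*m1*m2" unfolding v0_def P_def by (simp add: power2_eq_square algebra_simps)
  have v0al: "v0^2 - al^2 = -4*m1*m2*E0" using v0sq al2 unfolding k_def by (simp add: algebra_simps)
  have "v0^2 - al^2 > 0" using v0al mm E0 by (simp add: mult_neg_pos mult_pos_pos)
  then have "al < v0" using alpos v0pos by (smt (verit) power_mono)
  then have g0: "0 < g0" "g0 < 1" unfolding g0_def using alpos by (auto simp: field_simps)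
  have T: "T > 0" unfolding T_def using g0 alpos by (simp add: divide_neg_pos)
  define g where "g = (\<lambda>t. g0 * exp ((A+B)/2 * t))"
  define P1 where "P1 = (\<lambda>t. -(A + B * g t) / (2 * (1 - g t)))"
  define P2 where "P2 = (\<lambda>t. (B + A * g t) / (2 * (1 - g t)))"
  define Q1 where "Q1 = (\<lambda>t. c1 - A * t / 2 + ln (A + B * g t))"
  define Q2 where "Q2 = (\<lambda>t. c1 + ln ((A+B)^2 * g0) + B * t / 2 - ln (B + A * g t))"
  note ES = explicit_sol[OF A B g0(1) refl g_def P1_def P2_def Q1_def Q2_def]
  have gT: "g T = 1" unfolding g_def ABal T_def using alpos g0 by (simp add: exp_minus)
  have glt: "g t < 1" if "t < T" for t
  proof -
    have "(A+B)/2 * t < (A+B)/2 * T" using that ABal alpos by simp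
    then have "g t < g T" unfolding g_def using g0 by simp
    then show ?thesis using gT by simp
  qed
  have g00: "g 0 = g0" unfolding g_def by simp
  have va: "v0 + al \<noteq> 0" using alpos v0pos by simp
  have hA: "A + B * g0 = 2*al*(v0 - P)/(v0 + al)"
    unfolding A_def B_def g0_def using va by (simp add: field_simps; simp add: algebra_simps)
  have hB: "B + A * g0 = 2*al*(v0 + P)/(v0 + al)"
    unfolding A_def B_def g0_def using va by (simp add: field_simps; simp add: algebra_simps)
  have h1: "1 - g0 = 2*al/(v0+al)" unfolding g0_def using va by (simp add: field_simps)
  have hAB: "A + B = 2*al" unfolding A_def B_def by simp
  have ald: "al \<noteq> 0" using alpos by simp
  have "P1 0 = -(A + B*g0)/(2*(1-g0))" unfolding P1_def g00 by simp
  also have "\<dots> = -(2*al*(v0 - P)/(v0 + al))/(2*(2*al/(v0+al)))" by (simp only: hA h1)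
  also have "\<dots> = -((2*al*(v0 - P)/(v0 + al))/(2*(2*al/(v0+al))))" by (rule minus_divide_left[symmetric])
  also have "\<dots> = -((v0 - P)/2)" by (simp only: aux_div[OF va ald])
  finally have "P1 0 = -((v0 - P)/2)" .
  then have p10: "P1 0 = m1" by (simp add: v0_def P_def)
  have "P2 0 = (B + A*g0)/(2*(1-g0))" unfolding P2_def g00 by simp
  also have "\<dots> = (2*al*(v0 + P)/(v0 + al))/(2*(2*al/(v0+al)))" by (simp only: hB h1)
  also have "\<dots> = (v0 + P)/2" by (simp only: aux_div[OF va ald])
  finally have "P2 0 = (v0 + P)/2" .
  then have p20: "P2 0 = m2" by (simp add: v0_def P_def)
  have q10: "Q1 0 = x1" unfolding Q1_def g00 c1_def by simp
  have "exp (-(Q1 0 - Q2 0)) = (A+B)^2 * g0 / ((A + B * g0) * (B + A * g0))"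
    using ES(1)[of 0] g00 by simp
  also have "\<dots> = (v0^2 - al^2) / (v0^2 - P^2)"
  proof -
    have "(A+B)^2 * g0 / ((A + B * g0) * (B + A * g0)) =
       (2*al)^2*((v0-al)/(v0+al))/((2*al*(v0-P)/(v0+al))*(2*al*(v0+P)/(v0+al)))"
      apply (subst hA, subst hB, subst hAB) unfolding g0_def by (rule refl)
    also have "\<dots> = (v0^2 - al^2) / (v0^2 - P^2)"
      by (rule aux2) (use va alpos m in \<open>auto simp: v0_def P_def\<close>)
    finally show ?thesis .
  qed
  also have "\<dots> = E0" using v0al v0sq mm by (simp; auto)
  finally have "-(Q1 0 - Q2 0) = -(x1 - x2)" unfolding E0_def by simp
  then have q20: "Q2 0 = x2" using q10 by simp
  have sol: "peakon_hamilton_sol Q1 Q2 P1 P2 {0..<T}"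
    unfolding peakon_hamilton_sol_def
  proof
    fix t assume t: "t \<in> {0..<T}"
    then have gt: "g t < 1" using glt by simp
    have gtq: "Q1 t > Q2 t" using ES(2)[OF gt] .
    have abs: "\<bar>Q1 t - Q2 t\<bar> = Q1 t - Q2 t" using gtq by simp
    note D = ES(3)[OF gt]
    show "\<exists>a1 a2 b1 b2.
        (Q1 has_real_derivative a1) (at t within {0..<T}) \<and>
        (Q2 has_real_derivative a2) (at t within {0..<T}) \<and>
        (P1 has_real_derivative b1) (at t within {0..<T}) \<and>
        (P2 has_real_derivative b2) (at t within {0..<T}) \<and>
        ((\<lambda>y. peakon_H (Q1 t) (Q2 t) y (P2 t)) has_real_derivative a1) (at (P1 t)) \<and>
        ((\<lambda>y. peakon_H (Q1 t) (Q2 t) (P1 t) y) has_real_derivative a2) (at (P2 t)) \<and>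
        ((\<lambda>y. peakon_H y (Q2 t) (P1 t) (P2 t)) has_real_derivative (- b1)) (at (Q1 t)) \<and>
        ((\<lambda>y. peakon_H (Q1 t) y (P1 t) (P2 t)) has_real_derivative (- b2)) (at (Q2 t))"
      apply (rule exI[of _ "P1 t + P2 t * exp (-(Q1 t - Q2 t))"])
      apply (rule exI[of _ "P2 t + P1 t * exp (-(Q1 t - Q2 t))"])
      apply (rule exI[of _ "P1 t * P2 t * exp (-(Q1 t - Q2 t))"])
      apply (rule exI[of _ "-(P1 t * P2 t * exp (-(Q1 t - Q2 t)))"])
      using D H_dp1[of "Q1 t" "Q2 t" "P2 t" "P1 t"] H_dp2[of "Q1 t" "Q2 t" "P1 t" "P2 t"]
        H_dq1[OF gtq, of "P1 t" "P2 t"] H_dq2[OF gtq, of "P1 t" "P2 t"] abs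
      by (auto intro: has_field_derivative_at_within)
  qed
  have "((\<lambda>t. Q1 t - Q2 t) \<longlongrightarrow> Q1 T - Q2 T) (at T)"
    using ES(4)[of T] by (simp add: isCont_def)
  moreover have "Q1 T - Q2 T = 0"
  proof -
    have e: "(A + B) * (B + A) = (A+B)^2" by (simp add: power2_eq_square add.commute)
    have "(A+B)^2 \<noteq> 0" using A B by simp
    then have "exp (-(Q1 T - Q2 T)) = 1" using ES(1)[of T] gT e by simp
    then show ?thesis by simp
  qed
  ultimately have lim: "((\<lambda>t. Q1 t - Q2 t) \<longlongrightarrow> 0) (at_left T)"
    by (auto intro: tendsto_within_subset)
  have pos: "\<forall>t\<in>{0..<T}. Q1 t > Q2 t" using ES(2) glt by auto
  show ?thesis unfolding peakons_collide_def
    apply (rule exI[of _ T])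
    using T sol q10 q20 p10 p20 lim pos by blast
qed


theorem theorem3:
  fixes x1 x2 m1 m2 c :: real
  assumes "x1 > x2"
    and "c > 0"
    and "peakon_H1 x1 x2 m1 m2 = c"
  shows "(peakons_collide x1 x2 m1 m2 \<longleftrightarrow> \<bar>m1 + m2\<bar> < sqrt c \<and> m1 - m2 < 0)
       \<and> (peakons_collide x1 x2 m1 m2 \<longleftrightarrow> m1 < 0 \<and> m2 > 0)"
proof -
  have col: "peakons_collide x1 x2 m1 m2 \<longleftrightarrow> m1 < 0 \<and> m2 > 0"
  proof
    assume "peakons_collide x1 x2 m1 m2"
    then obtain T q1 q2 p1 p2 where "T > 0" "peakon_hamilton_sol q1 q2 p1 p2 {0..<T}"
      "q1 0 = x1" "q2 0 = x2" "p1 0 = m1" "p2 0 = m2" "\<forall>t\<in>{0..<T}. q1 t > q2 t"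
      "((\<lambda>t. q1 t - q2 t) \<longlongrightarrow> 0) (at_left T)"
      unfolding peakons_collide_def by blast
    then show "m1 < 0 \<and> m2 > 0" using collide_only_if by metis
  next
    assume "m1 < 0 \<and> m2 > 0"
    then show "peakons_collide x1 x2 m1 m2" using collide_if assms(1) by blast
  qed
  define E where "E = exp (-\<bar>x1 - x2\<bar>)"
  have E: "0 < E" "E < 1" using assms(1) unfolding E_def by auto
  have c: "c = (m1 + m2)^2 + 2*m1*m2*(E - 1)"
    using assms(3) unfolding peakon_H1_def E_def by (simp add: power2_eq_square algebra_simps)
  have "\<bar>m1 + m2\<bar> = sqrt ((m1 + m2)^2)" by simp
  then have "\<bar>m1 + m2\<bar> < sqrt c \<longleftrightarrow> (m1 + m2)^2 < c"
    by (simp only: real_sqrt_less_iff)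
  also have "\<dots> \<longleftrightarrow> m1 * m2 < 0"
  proof -
    have "(m1 + m2)^2 < c \<longleftrightarrow> 0 < m1*m2*(E - 1)" using c by auto
    also have "\<dots> \<longleftrightarrow> m1 * m2 < 0" using E by (simp add: zero_less_mult_iff)
    finally show ?thesis .
  qed
  finally have "(\<bar>m1 + m2\<bar> < sqrt c \<and> m1 - m2 < 0) \<longleftrightarrow> m1 < 0 \<and> m2 > 0"
    by (auto simp: mult_less_0_iff)
  with col show ?thesis by blast
qed

end
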